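(* Let $\Omega$ be a finite set, $V_\Omega=\mathbb{R}^\Omega$, and $V_\Upsilon,V_\Gamma\le V_\Omega$. Let $\mathcal{P}$, $\mathcal{Q}$, $\mathcal{R}$ be orthogonal decompositions of $V_\Omega$, $V_\Upsilon$, $V_\Gamma$, respectively, such that $\mathcal{Q}$ and $\mathcal{R}$ are both structure balanced in relation to $\mathcal{P}$. If $\mathbf{PQPRP}$ is symmetric for all $\mathbf{P}\in\mathcal{P}$, $\mathbf{Q}\in\mathcal{Q}$ and $\mathbf{R}\in\mathcal{R}$, then the decomposition $\mathcal{P}\vartriangleright\mathcal{Q}$ is compatible with the decomposition $\mathcal{P}\vartriangleright\mathcal{R}$, i.e. $\mathbf{BC}=\mathbf{CB}$ for all $\mathbf{B}\in\mathcal{P}\vartriangleright\mathcal{Q}$ and all $\mathbf{C}\in\mathcal{P}\vartriangleright\mathcal{R}$.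
   Context: $V_\Omega$ carries the standard inner product; all matrices are $\Omega\times\Omega$. An orthogonal decomposition of a subspace $W\le V_\Omega$ is a finite set of nonzero symmetric idempotent matrices that are mutually orthogonal and whose sum is the orthogonal projector onto $W$; zero matrices are discarded from listed decompositions. For projectors $\mathbf{A},\mathbf{B}$: $\mathbf{B}$ has first-order balance in relation to $\mathbf{A}$ if $\mathbf{BAB}=\lambda_{\mathbf{AB}}\mathbf{B}$ for a scalar $\lambda_{\mathbf{AB}}$; if $\lambda_{\mathbf{AB}}\ne0$, $\mathbf{A}\vartriangleright\mathbf{B}=\lambda_{\mathbf{AB}}^{-1}\mathbf{ABA}$. $\mathcal{B}$ is structure balanced in relation to $\mathcal{A}$ if every $\mathbf{B}\in\mathcal{B}$ has first-order balance in relation to every $\mathbf{A}\in\mathcal{A}$, and $\mathbf{B}_1\mathbf{A}\mathbf{B}_2=\mathbf{0}$ for all $\mathbf{A}\in\mathcal{A}$ and distinct $\mathbf{B}_1,\mathbf{B}_2\in\mathcal{B}$. Then $\mathbf{A}\vdash\mathcal{B}=\mathbf{A}-\sum'_{\mathbf{B}}\mathbf{A}\vartriangleright\mathbf{B}$ (sum over $\mathbf{B}$ with $\lambda_{\mathbf{AB}}\ne0$) and $\mathcal{A}\vartriangleright\mathcal{B}=\{\mathbf{A}\vartriangleright\mathbf{B}:\mathbf{A}\in\mathcal{A},\mathbf{B}\in\mathcal{B},\lambda_{\mathbf{AB}}\neq0\}\cup\{\mathbf{A}\vdash\mathcal{B}:\mathbf{A}\in\mathcal{A}\}$ (zeros discarded).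 *)

theory Defs
  imports "HOL-Analysis.Analysis"
begin

text \<open>Omega is the finite index type 'n; V_Omega = real^'n; matrices are real^'n^'n.\<close>

definition is_projector :: "real^'n^'n \<Rightarrow> bool" where
  "is_projector A \<longleftrightarrow> transpose A = A \<and> A ** A = A"

definition orth_projector_onto :: "real^'n^'n \<Rightarrow> (real^'n) set \<Rightarrow> bool" where
  "orth_projector_onto P W \<longleftrightarrow> is_projector P \<and> range (\<lambda>x. P *v x) = W"

definition orth_decomp :: "(real^'n^'n) set \<Rightarrow> (real^'n) set \<Rightarrow> bool" where
  "orth_decomp D W \<longleftrightarrow> subspace W \<and> finite D \<and>
     (\<forall>A\<in>D. A \<noteq> 0 \<and> is_projector A) \<and>
     (\<forall>A\<in>D. \<forall>B\<in>D. A \<noteq> B \<longrightarrow> A ** B = 0) \<and>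
     orth_projector_onto (\<Sum>D) W"

definition fo_balance :: "real^'n^'n \<Rightarrow> real^'n^'n \<Rightarrow> bool" where
  "fo_balance B A \<longleftrightarrow> (\<exists>l. B ** A ** B = l *\<^sub>R B)"

text \<open>The scalar lambda_AB (well-defined when B is nonzero and balanced w.r.t. A).\<close>
definition lam :: "real^'n^'n \<Rightarrow> real^'n^'n \<Rightarrow> real" where
  "lam A B = (SOME l. B ** A ** B = l *\<^sub>R B)"

definition tri :: "real^'n^'n \<Rightarrow> real^'n^'n \<Rightarrow> real^'n^'n" where
  "tri A B = inverse (lam A B) *\<^sub>R (A ** B ** A)"

definition struct_balanced :: "(real^'n^'n) set \<Rightarrow> (real^'n^'n) set \<Rightarrow> bool" where
  "struct_balanced BB AA \<longleftrightarrow>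
     (\<forall>B\<in>BB. \<forall>A\<in>AA. fo_balance B A) \<and>
     (\<forall>A\<in>AA. \<forall>B1\<in>BB. \<forall>B2\<in>BB. B1 \<noteq> B2 \<longrightarrow> B1 ** A ** B2 = 0)"

definition vdash :: "real^'n^'n \<Rightarrow> (real^'n^'n) set \<Rightarrow> real^'n^'n" where
  "vdash A BB = A - (\<Sum>B\<in>{B\<in>BB. lam A B \<noteq> 0}. tri A B)"

definition tri_set :: "(real^'n^'n) set \<Rightarrow> (real^'n^'n) set \<Rightarrow> (real^'n^'n) set" where
  "tri_set AA BB =
     ({tri A B | A B. A \<in> AA \<and> B \<in> BB \<and> lam A B \<noteq> 0} \<union> {vdash A BB | A. A \<in> AA}) - {0}"

end

theory Submission
  imports Defs
begin

lemma mm_rdist: "((A::real^'n::finite^'m) + B) ** C = A ** C + B ** C"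
  by (vector matrix_matrix_mult_def sum.distrib[symmetric] field_simps)

lemma mm_ldiff: "(A::real^'n::finite^'m) ** (B - C) = A ** B - A ** C"
  by (vector matrix_matrix_mult_def sum_subtractf[symmetric] field_simps)

lemma mm_rdiff: "((A::real^'n::finite^'m) - B) ** C = A ** C - B ** C"
  by (vector matrix_matrix_mult_def sum_subtractf[symmetric] field_simps)

lemma mm_sum_left: "(A::real^'n::finite^'m) ** sum f S = (\<Sum>x\<in>S. A ** f x)"
proof (cases "finite S")
  case True
  then show ?thesis by (induction S rule: finite_induct) (auto simp: matrix_add_ldistrib)
qed simp

lemma mm_sum_right: "sum f S ** (C::real^'n::finite^'m) = (\<Sum>x\<in>S. f x ** C)"
proof (cases "finite S")
  case True
  then show ?thesis by (induction S rule: finite_induct) (auto simp: mm_rdist)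
qed simp

lemma comm_sum:
  assumes "\<forall>x\<in>S. Y ** f x = f x ** (Y::real^'n::finite^'n)"
  shows "Y ** sum f S = sum f S ** Y"
  using assms by (simp add: mm_sum_left mm_sum_right)

lemma tri_comm:
  assumes "Y ** P = P ** Y" "Y ** (P ** Q ** P) = (P ** Q ** P) ** (Y::real^'n::finite^'n)"
  shows "Y ** tri P Q = tri P Q ** Y"
  using assms by (simp add: tri_def matrix_scalar_ac scalar_matrix_assoc[symmetric])

lemma vdash_comm:
  assumes "Y ** P = P ** Y" "\<forall>Q\<in>QQ. Y ** (P ** Q ** P) = (P ** Q ** P) ** (Y::real^'n::finite^'n)"
  shows "Y ** vdash P QQ = vdash P QQ ** Y"
proof -
  have "Y ** (\<Sum>B\<in>{B\<in>QQ. lam P B \<noteq> 0}. tri P B) = (\<Sum>B\<in>{B\<in>QQ. lam P B \<noteq> 0}. tri P B) ** Y"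
    by (rule comm_sum) (use assms tri_comm in auto)
  then show ?thesis using assms(1) by (simp add: vdash_def mm_ldiff mm_rdiff)
qed

lemma tri_absorb:
  assumes "P ** P = (P::real^'n::finite^'n)"
  shows "P ** tri P Q = tri P Q" "tri P Q ** P = tri P Q"
proof -
  have a: "P ** (P ** Q ** P) = P ** Q ** P" "(P ** Q ** P) ** P = P ** Q ** P"
    using assms by (metis matrix_mul_assoc)+
  show "P ** tri P Q = tri P Q" "tri P Q ** P = tri P Q"
    using a by (simp_all add: tri_def matrix_scalar_ac scalar_matrix_assoc[symmetric])
qed

lemma vdash_absorb:
  assumes "P ** P = (P::real^'n::finite^'n)"
  shows "P ** vdash P QQ = vdash P QQ" "vdash P QQ ** P = vdash P QQ"
  using assms tri_absorb[OF assms]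
  by (simp_all add: vdash_def mm_ldiff mm_rdiff mm_sum_left mm_sum_right)

lemma tri_set_cases:
  assumes "B \<in> tri_set PP QQ"
  obtains P where "P \<in> PP" "\<And>Y. Y ** P = P ** Y \<Longrightarrow> \<forall>Q\<in>QQ. Y ** (P ** Q ** P) = (P ** Q ** P) ** Y
      \<Longrightarrow> Y ** B = B ** Y"
    "P ** P = P \<Longrightarrow> P ** B = B \<and> B ** P = B"
  using assms unfolding tri_set_def
  by (auto intro: tri_comm vdash_comm dest: tri_absorb vdash_absorb)

theorem lemma2:
  fixes PP QQ RR :: "(real^'n::finite^'n) set"
    and VU VG :: "(real^'n) set"
  assumes "orth_decomp PP (UNIV :: (real^'n) set)"
    and "orth_decomp QQ VU"
    and "orth_decomp RR VG"
    and "struct_balanced QQ PP"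
    and "struct_balanced RR PP"
    and "\<forall>P\<in>PP. \<forall>Q\<in>QQ. \<forall>R\<in>RR. transpose (P ** Q ** P ** R ** P) = P ** Q ** P ** R ** P"
  shows "\<forall>B\<in>tri_set PP QQ. \<forall>C\<in>tri_set PP RR. B ** C = C ** B"
proof (intro ballI)
  fix B C assume B: "B \<in> tri_set PP QQ" and C: "C \<in> tri_set PP RR"
  have projP: "\<And>P. P \<in> PP \<Longrightarrow> P ** P = P \<and> transpose P = P"
    using assms(1) by (auto simp: orth_decomp_def is_projector_def)
  have orthP: "\<And>P P'. P \<in> PP \<Longrightarrow> P' \<in> PP \<Longrightarrow> P \<noteq> P' \<Longrightarrow> P ** P' = 0"
    using assms(1) by (auto simp: orth_decomp_def)
  have projQ: "\<And>Q. Q \<in> QQ \<Longrightarrow> transpose Q = Q"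
    using assms(2) by (auto simp: orth_decomp_def is_projector_def)
  have projR: "\<And>R. R \<in> RR \<Longrightarrow> transpose R = R"
    using assms(3) by (auto simp: orth_decomp_def is_projector_def)
  have key: "(P ** Q ** P) ** (P ** R ** P) = (P ** R ** P) ** (P ** Q ** P)"
    if P: "P \<in> PP" and Q: "Q \<in> QQ" and R: "R \<in> RR" for P Q R
  proof -
    have PP': "P ** P = P" "transpose P = P" using projP[OF P] by auto
    have e1: "(P ** Q ** P) ** (P ** R ** P) = P ** Q ** P ** R ** P"
      by (metis PP'(1) matrix_mul_assoc)
    have e2: "(P ** R ** P) ** (P ** Q ** P) = P ** R ** P ** Q ** P"
      by (metis PP'(1) matrix_mul_assoc)
    have "transpose (P ** Q ** P ** R ** P) = P ** R ** P ** Q ** P"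
      by (simp add: matrix_transpose_mul PP'(2) projQ[OF Q] projR[OF R] matrix_mul_assoc)
    then show ?thesis using e1 e2 assms(6) P Q R by metis
  qed
  obtain P where P: "P \<in> PP" and Bc: "\<And>Y. Y ** P = P ** Y \<Longrightarrow> \<forall>Q\<in>QQ. Y ** (P ** Q ** P) = (P ** Q ** P) ** Y
      \<Longrightarrow> Y ** B = B ** Y" and Ba: "P ** P = P \<Longrightarrow> P ** B = B \<and> B ** P = B"
    using tri_set_cases[OF B] by metis
  obtain P' where P': "P' \<in> PP" and Cc: "\<And>Y. Y ** P' = P' ** Y \<Longrightarrow> \<forall>R\<in>RR. Y ** (P' ** R ** P') = (P' ** R ** P') ** Y
      \<Longrightarrow> Y ** C = C ** Y" and Ca: "P' ** P' = P' \<Longrightarrow> P' ** C = C \<and> C ** P' = C"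
    using tri_set_cases[OF C] by metis
  have Pi: "P ** P = P" using projP[OF P] by auto
  have Pi': "P' ** P' = P'" using projP[OF P'] by auto
  show "B ** C = C ** B"
  proof (cases "P = P'")
    case True
    have BP: "P ** B = B ** P" using Bc[of P] Pi by (metis matrix_mul_assoc)
    have BR: "(P ** R ** P) ** B = B ** (P ** R ** P)" if R: "R \<in> RR" for R
    proof (rule Bc)
      show "P ** R ** P ** P = P ** (P ** R ** P)" using Pi by (metis matrix_mul_assoc)
      show "\<forall>Q\<in>QQ. P ** R ** P ** (P ** Q ** P) = P ** Q ** P ** (P ** R ** P)"
        using key P R by metis
    qed
    have "B ** C = C ** B"
      by (rule Cc) (use BP BR True in auto)
    then show ?thesis .
  next
    case False
    have "B ** C = B ** P ** (P' ** C)" using Ba Ca Pi Pi' by metis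
    also have "\<dots> = 0" using orthP[OF P P' False] by (metis matrix_mul_assoc times0_left times0_right)
    finally have 1: "B ** C = 0" .
    have "C ** B = C ** P' ** (P ** B)" using Ba Ca Pi Pi' by metis
    also have "\<dots> = 0" using orthP[OF P' P] False by (metis matrix_mul_assoc times0_left times0_right)
    finally show ?thesis using 1 by simp
  qed
qed

end
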